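(* Let $G=K_{n_1}\,\square\,\cdots\,\square\, K_{n_d}$, where each $n_j\geq 2$ is even and $d\geq 2$ is odd. Then for every vertex $u$ of $G$, $\uparrow^{2}G$ has Laplacian perfect state transfer between $(0,u)$ and $(1,u)$. In particular, if $q\geq 2$ is even (and $d\geq2$ is odd), then for every vertex $u$ of the Hamming graph $H(d,q)$, $\uparrow^{2}H(d,q)$ has Laplacian perfect state transfer between $(0,u)$ and $(1,u)$.
   Context: All graphs are simple, undirected and unweighted. $K_n$ is the complete graph on $n$ vertices. The Cartesian product $G\,\square\, H$ of graphs on $m$ and $n$ vertices is the graph with Laplacian $L(G)\otimes I_n+I_m\otimes L(H)$, where $L=D-A$. The Hamming graph $H(d,q)$ is the Cartesian product of $d$ copies of $K_q$. The blow-up $\uparrow^{2}G$ has vertex set $\mathbb{Z}_2\times V(G)$, with $(l,u)\sim(m,v)$ iff $u\sim v$ in $G$. A graph with Laplacian $L$ has Laplacian perfect state transfer between $a,b$ if $\exp(i\tau L)\mathbf{e}_a=\gamma\mathbf{e}_b$ for some $\tau>0$, $\gamma\in\mathbb{C}$. *)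

theory Defs
  imports Complex_Main
begin

text \<open>A simple graph is given by a vertex set and an adjacency relation
 (symmetric, irreflexive, only between vertices of the set).\<close>
type_synonym 'v graph = "'v set \<times> ('v \<Rightarrow> 'v \<Rightarrow> bool)"

definition verts :: "'v graph \<Rightarrow> 'v set" where "verts G = fst G"
definition adj :: "'v graph \<Rightarrow> 'v \<Rightarrow> 'v \<Rightarrow> bool" where "adj G = snd G"

definition degree :: "'v graph \<Rightarrow> 'v \<Rightarrow> nat" where
  "degree G u = card {w \<in> verts G. adj G u w}"

definition laplacian :: "'v graph \<Rightarrow> 'v \<Rightarrow> 'v \<Rightarrow> complex" where
  "laplacian G x y = (if x = y then of_nat (degree G x) else 0) - (if adj G x y then 1 else 0)"

fun mat_pow_on :: "'v set \<Rightarrow> ('v \<Rightarrow> 'v \<Rightarrow> complex) \<Rightarrow> nat \<Rightarrow> 'v \<Rightarrow> 'v \<Rightarrow> complex" where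
  "mat_pow_on V A 0 x y = (if x = y then 1 else 0)"
| "mat_pow_on V A (Suc k) x y = (\<Sum>w\<in>V. A x w * mat_pow_on V A k w y)"

definition mat_exp_on :: "'v set \<Rightarrow> ('v \<Rightarrow> 'v \<Rightarrow> complex) \<Rightarrow> 'v \<Rightarrow> 'v \<Rightarrow> complex" where
  "mat_exp_on V A x y = (\<Sum>k. mat_pow_on V A k x y / of_nat (fact k))"

definition lap_pst :: "'v graph \<Rightarrow> 'v \<Rightarrow> 'v \<Rightarrow> bool" where
  "lap_pst G a b \<longleftrightarrow> (\<exists>\<tau>::real. \<tau> > 0 \<and> (\<exists>\<gamma>::complex. \<forall>c\<in>verts G.
      mat_exp_on (verts G) (\<lambda>x y. \<i> * of_real \<tau> * laplacian G x y) c a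
        = (if c = b then \<gamma> else 0)))"

definition complete_graph :: "nat \<Rightarrow> nat graph" where
  "complete_graph n = ({0..<n}, \<lambda>x y. x \<in> {0..<n} \<and> y \<in> {0..<n} \<and> x \<noteq> y)"

definition cart_prod :: "'v graph list \<Rightarrow> 'v list graph" where
  "cart_prod Gs =
    (let V = {xs. length xs = length Gs \<and> (\<forall>j<length Gs. xs ! j \<in> verts (Gs ! j))}
     in (V, \<lambda>xs ys. xs \<in> V \<and> ys \<in> V \<and>
           (\<exists>j<length Gs. adj (Gs ! j) (xs ! j) (ys ! j) \<and>
              (\<forall>i<length Gs. i \<noteq> j \<longrightarrow> xs ! i = ys ! i))))"

definition hamming :: "nat \<Rightarrow> nat \<Rightarrow> nat list graph" where
  "hamming d q = cart_prod (replicate d (complete_graph q))"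

definition blowup2 :: "'v graph \<Rightarrow> (nat \<times> 'v) graph" where
  "blowup2 G = ({0, 1} \<times> verts G, \<lambda>(l, u) (m, v). l \<in> {0,1} \<and> m \<in> {0,1} \<and> adj G u v)"

end

theory Submission imports Defs begin

lemma sum_sum_list_swap:
  "(\<Sum>w\<in>V. \<Sum>p\<leftarrow>F. g w p) = (\<Sum>p\<leftarrow>F. \<Sum>w\<in>V. (g w p :: complex))"
  by (induction F) (auto simp: sum.distrib)

lemma sum_list_mult_left: "(\<Sum>p\<leftarrow>F. c * f p) = (c::complex) * (\<Sum>p\<leftarrow>F. f p)"
  by (induction F) (auto simp: algebra_simps)

lemma mat_pow_decomp:
  assumes eig: "\<forall>p\<in>set F. \<forall>x\<in>V. (\<Sum>y\<in>V. M x y * snd p y) = fst p * snd p x"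
    and dec: "\<forall>x\<in>V. (if x = a then 1 else 0) = (\<Sum>p\<leftarrow>F. snd p x)"
  shows "\<forall>c\<in>V. mat_pow_on V M k c a = (\<Sum>p\<leftarrow>F. fst p ^ k * snd p c)"
proof (induction k)
  case 0
  then show ?case using dec by simp
next
  case (Suc k)
  show ?case
  proof
    fix c assume c: "c \<in> V"
    have "mat_pow_on V M (Suc k) c a = (\<Sum>w\<in>V. M c w * (\<Sum>p\<leftarrow>F. fst p ^ k * snd p w))"
      using Suc by simp
    also have "\<dots> = (\<Sum>w\<in>V. \<Sum>p\<leftarrow>F. fst p ^ k * (M c w * snd p w))"
      by (simp add: sum_list_mult_left[symmetric] algebra_simps)
    also have "\<dots> = (\<Sum>p\<leftarrow>F. \<Sum>w\<in>V. fst p ^ k * (M c w * snd p w))"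
      by (rule sum_sum_list_swap)
    also have "\<dots> = (\<Sum>p\<leftarrow>F. fst p ^ k * (\<Sum>w\<in>V. M c w * snd p w))"
      by (simp add: sum_distrib_left)
    also have "\<dots> = (\<Sum>p\<leftarrow>F. fst p ^ Suc k * snd p c)"
    proof (rule arg_cong[where f=sum_list], rule map_cong[OF refl])
      fix p assume "p \<in> set F"
      then show "fst p ^ k * (\<Sum>w\<in>V. M c w * snd p w) = fst p ^ Suc k * snd p c"
        using eig c by simp
    qed
    finally show "mat_pow_on V M (Suc k) c a = (\<Sum>p\<leftarrow>F. fst p ^ Suc k * snd p c)" .
  qed
qed

lemma exp_series_list:
  "(\<lambda>k. (\<Sum>p\<leftarrow>F. fst p ^ k * snd p c) / of_nat (fact k)) sums (\<Sum>p\<leftarrow>F. exp (fst p) * (snd p c :: complex))"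
proof (induction F)
  case Nil
  then show ?case by simp
next
  case (Cons q F)
  have "(\<lambda>k. fst q ^ k /\<^sub>R fact k) sums exp (fst q)" by (rule exp_converges)
  then have "(\<lambda>k. fst q ^ k / of_nat (fact k)) sums exp (fst q)"
    by (simp add: scaleR_conv_of_real divide_inverse mult.commute)
  then have "(\<lambda>k. fst q ^ k / of_nat (fact k) * snd q c) sums (exp (fst q) * snd q c)"
    by (rule sums_mult2)
  from sums_add[OF this Cons.IH] show ?case
    by (simp add: add_divide_distrib algebra_simps)
qed

lemma mat_exp_decomp:
  assumes eig: "\<forall>p\<in>set F. \<forall>x\<in>V. (\<Sum>y\<in>V. M x y * snd p y) = fst p * snd p x"
    and dec: "\<forall>x\<in>V. (if x = a then 1 else 0) = (\<Sum>p\<leftarrow>F. snd p x)"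
    and c: "c \<in> V"
  shows "mat_exp_on V M c a = (\<Sum>p\<leftarrow>F. exp (fst p) * snd p c)"
proof -
  have "(\<lambda>k. mat_pow_on V M k c a / of_nat (fact k)) sums (\<Sum>p\<leftarrow>F. exp (fst p) * snd p c)"
    using mat_pow_decomp[OF eig dec] c exp_series_list[where F=F and c=c] by simp
  then show ?thesis unfolding mat_exp_on_def by (rule sums_unique[symmetric])
qed

definition lapv :: "'v graph \<Rightarrow> ('v \<Rightarrow> complex) \<Rightarrow> 'v \<Rightarrow> complex" where
  "lapv G f x = (\<Sum>y\<in>verts G. laplacian G x y * f y)"

definition nbh :: "'v graph \<Rightarrow> 'v \<Rightarrow> 'v set" where
  "nbh G x = {y\<in>verts G. adj G x y}"

lemma lapv_eq:
  assumes "finite (verts G)" "x \<in> verts G"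
  shows "lapv G f x = of_nat (degree G x) * f x - (\<Sum>y\<in>nbh G x. f y)"
proof -
  have "lapv G f x = (\<Sum>y\<in>verts G. (if x = y then of_nat (degree G x) * f y else 0))
      - (\<Sum>y\<in>verts G. if adj G x y then f y else 0)"
    unfolding lapv_def laplacian_def sum_subtractf[symmetric]
    by (rule sum.cong) (auto simp: left_diff_distrib)
  also have "\<dots> = of_nat (degree G x) * f x - (\<Sum>y\<in>nbh G x. f y)"
    using assms by (simp add: nbh_def sum.inter_filter)
  finally show ?thesis .
qed


lemma sum_list_div: "(\<Sum>p\<leftarrow>F. f p / c) = (\<Sum>p\<leftarrow>F. f p) / (c::complex)"
  by (induction F) (auto simp: add_divide_distrib)

lemma exp_half_pi: "exp (\<i> * of_real (pi/2) * (2 * of_nat n)) = (-1::complex) ^ n"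
proof -
  have "\<i> * of_real (pi/2) * (2 * of_nat n) = of_nat n * (\<i> * of_real pi)"
    by (simp add: field_simps)
  then show ?thesis by (simp only: exp_of_nat_mult exp_pi_i')
qed

lemma blowup_pst:
  fixes G :: "'v graph" and F :: "(nat \<times> ('v \<Rightarrow> complex)) list"
  assumes fin: "finite (verts G)" and u: "u \<in> verts G" and oddu: "odd (degree G u)"
    and eig: "\<forall>p\<in>set F. even (fst p) \<and> (\<forall>x\<in>verts G. lapv G (snd p) x = of_nat (fst p) * snd p x)"
    and dec: "\<forall>x\<in>verts G. (if x = u then 1 else 0) = (\<Sum>p\<leftarrow>F. snd p x)"
  shows "lap_pst (blowup2 G) (0, u) (1, u)"
proof -
  let ?B = "blowup2 G"
  have vb: "verts ?B = {0,1} \<times> verts G" by (simp add: blowup2_def verts_def)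
  have finb: "finite (verts ?B)" using fin vb by simp
  have nb: "nbh ?B (l, x) = {0,1} \<times> nbh G x" if "l \<in> {0,1}" for l x
    using that by (auto simp: nbh_def blowup2_def verts_def adj_def)
  have finn: "finite (nbh G x)" for x using fin by (simp add: nbh_def)
  have degb: "degree ?B (l, x) = 2 * degree G x" if "l \<in> {0,1}" for l x
  proof -
    have "degree ?B (l, x) = card (nbh ?B (l,x))" by (simp add: degree_def nbh_def)
    also have "\<dots> = 2 * card (nbh G x)" using nb[OF that] by (simp add: card_cartesian_product)
    finally show ?thesis by (simp add: degree_def nbh_def)
  qed
  have lapb: "lapv ?B f (l, x) = 2 * of_nat (degree G x) * f (l, x)
      - (\<Sum>y\<in>nbh G x. f (0, y) + f (1, y))" if "(l, x) \<in> verts ?B" for f l x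
  proof -
    have l: "l \<in> {0,1}" using that vb by auto
    have "(\<Sum>z\<in>nbh ?B (l, x). f z) = (\<Sum>m\<in>{0::nat,1}. \<Sum>y\<in>nbh G x. f (m, y))"
      unfolding nb[OF l] by (simp add: sum.cartesian_product)
    also have "\<dots> = (\<Sum>y\<in>nbh G x. f (0, y) + f (1, y))" by (simp add: sum.distrib)
    finally show ?thesis using lapv_eq[OF finb that, of f] degb[OF l] by simp
  qed
  define \<tau> :: real where "\<tau> = pi / 2"
  define M where "M = (\<lambda>x y. \<i> * of_real \<tau> * laplacian ?B x y)"
  have Mlap: "(\<Sum>y\<in>verts ?B. M x y * f y) = \<i> * of_real \<tau> * lapv ?B f x" for x f
    unfolding M_def lapv_def by (simp add: sum_distrib_left mult.assoc)
  define a where "a = (\<lambda>(l::nat, x). (if l = 0 then 1 else -1) * (if x = u then 1 else 0) / (2::complex))"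
  define F' where "F' = map (\<lambda>p. (\<i> * of_real \<tau> * (2 * of_nat (fst p)), \<lambda>(l::nat, x). snd p x / 2)) F
      @ [(\<i> * of_real \<tau> * (2 * of_nat (degree G u)), a)]"
  have eig': "\<forall>p\<in>set F'. \<forall>x\<in>verts ?B. (\<Sum>y\<in>verts ?B. M x y * snd p y) = fst p * snd p x"
  proof (intro ballI)
    fix p z assume p: "p \<in> set F'" and z: "z \<in> verts ?B"
    obtain l x where zlx: "z = (l, x)" by (cases z)
    have x: "x \<in> verts G" and l: "l \<in> {0,1}" using z zlx vb by auto
    show "(\<Sum>y\<in>verts ?B. M z y * snd p y) = fst p * snd p z"
    proof (cases "p \<in> set (map (\<lambda>p. (\<i> * of_real \<tau> * (2 * of_nat (fst p)), \<lambda>(l::nat, x). snd p x / 2)) F)")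
      case True
      then obtain q where q: "q \<in> set F" and pq: "p = (\<i> * of_real \<tau> * (2 * of_nat (fst q)), \<lambda>(l::nat, x). snd q x / 2)"
        by auto
      have "lapv ?B (snd p) z = 2 * of_nat (degree G x) * (snd q x / 2) - (\<Sum>y\<in>nbh G x. snd q y)"
        using lapb[of l x "snd p"] z zlx pq by simp
      also have "\<dots> = lapv G (snd q) x" using lapv_eq[OF fin x] by simp
      also have "\<dots> = of_nat (fst q) * snd q x" using eig q x by blast
      finally show ?thesis using Mlap zlx pq by simp
    next
      case False
      then have pa: "p = (\<i> * of_real \<tau> * (2 * of_nat (degree G u)), a)" using p F'_def by auto
      have "lapv ?B a z = 2 * of_nat (degree G x) * a (l, x)"
        using lapb[of l x a] z zlx by (simp add: a_def)
      also have "\<dots> = 2 * of_nat (degree G u) * a (l, x)" by (simp add: a_def)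
      finally show ?thesis using Mlap zlx pa by simp
    qed
  qed
  have dec': "\<forall>z\<in>verts ?B. (if z = (0, u) then 1 else 0) = (\<Sum>p\<leftarrow>F'. snd p z)"
  proof
    fix z assume z: "z \<in> verts ?B"
    obtain l x where zlx: "z = (l, x)" by (cases z)
    have x: "x \<in> verts G" and l: "l \<in> {0,1}" using z zlx vb by auto
    have "(\<Sum>p\<leftarrow>F'. snd p z) = (\<Sum>p\<leftarrow>F. snd p x) / 2 + a (l, x)"
      by (simp add: F'_def zlx o_def sum_list_div)
    also have "\<dots> = (if x = u then 1 else 0) / 2 + a (l, x)" using dec x by simp
    finally show "(if z = (0, u) then 1 else 0) = (\<Sum>p\<leftarrow>F'. snd p z)"
      using l zlx by (auto simp: a_def)
  qed
  have res: "mat_exp_on (verts ?B) M c (0, u) = (if c = (1, u) then 1 else 0)" if c: "c \<in> verts ?B" for c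
  proof -
    obtain l x where clx: "c = (l, x)" by (cases c)
    have x: "x \<in> verts G" and l: "l \<in> {0,1}" using c clx vb by auto
    have "mat_exp_on (verts ?B) M c (0, u) = (\<Sum>p\<leftarrow>F'. exp (fst p) * snd p c)"
      by (rule mat_exp_decomp[OF eig' dec' c])
    also have "\<dots> = (\<Sum>p\<leftarrow>F. exp (\<i> * of_real \<tau> * (2 * of_nat (fst p))) * (snd p x / 2))
        + exp (\<i> * of_real \<tau> * (2 * of_nat (degree G u))) * a (l, x)"
      by (simp add: F'_def clx o_def)
    also have "\<dots> = (\<Sum>p\<leftarrow>F. snd p x / 2) - a (l, x)"
    proof -
      have "(\<Sum>p\<leftarrow>F. exp (\<i> * of_real \<tau> * (2 * of_nat (fst p))) * (snd p x / 2))
          = (\<Sum>p\<leftarrow>F. snd p x / 2)"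
      proof (rule arg_cong[where f=sum_list], rule map_cong[OF refl])
        fix p assume "p \<in> set F"
        then have "even (fst p)" using eig by blast
        then show "exp (\<i> * of_real \<tau> * (2 * of_nat (fst p))) * (snd p x / 2) = snd p x / 2"
          unfolding \<tau>_def exp_half_pi by simp
      qed
      moreover have "exp (\<i> * of_real \<tau> * (2 * of_nat (degree G u))) = -1"
        unfolding \<tau>_def exp_half_pi using oddu by simp
      ultimately show ?thesis by simp
    qed
    also have "\<dots> = (if x = u then 1 else 0) / 2 - a (l, x)"
      using dec x by (simp add: sum_list_div)
    finally show ?thesis using l clx by (auto simp: a_def)
  qed
  show ?thesis unfolding lap_pst_def
    apply (rule exI[of _ \<tau>])
    apply (intro conjI)
     apply (simp add: \<tau>_def)
    apply (rule exI[of _ 1])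
    using res unfolding M_def by simp
qed


definition P :: "nat list \<Rightarrow> nat list graph" where
  "P ns = cart_prod (map complete_graph ns)"

lemma vertsP: "verts (P ns) = {xs. length xs = length ns \<and> (\<forall>j<length ns. xs ! j < ns ! j)}"
  by (simp add: P_def cart_prod_def Let_def verts_def complete_graph_def)

lemma adjP: "adj (P ns) xs ys \<longleftrightarrow> xs \<in> verts (P ns) \<and> ys \<in> verts (P ns) \<and>
   (\<exists>j<length ns. xs ! j \<noteq> ys ! j \<and> (\<forall>i<length ns. i \<noteq> j \<longrightarrow> xs ! i = ys ! i))"
  unfolding vertsP by (auto simp: P_def cart_prod_def Let_def verts_def adj_def complete_graph_def)

lemma vertsP_Nil: "verts (P []) = {[]}"
  by (auto simp: vertsP)

lemma vertsP_Cons: "z \<in> verts (P (n # ms)) \<longleftrightarrow> (\<exists>y ys. z = y # ys \<and> y < n \<and> ys \<in> verts (P ms))"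
  by (cases z) (auto simp: vertsP All_less_Suc2)

lemma vertsP_Cons': "verts (P (n # ms)) = (\<lambda>(y, ys). y # ys) ` ({..<n} \<times> verts (P ms))"
  using vertsP_Cons[of _ n ms] by auto

lemma finite_vertsP: "finite (verts (P ns))"
proof (induction ns)
  case Nil then show ?case by (simp add: vertsP_Nil)
next
  case (Cons n ms) then show ?case by (simp add: vertsP_Cons')
qed

lemma nbhP_Nil: "nbh (P []) x = {}"
  by (simp add: nbh_def adjP)

lemma nbhP_Cons:
  assumes x: "x < n" and xs: "xs \<in> verts (P ms)"
  shows "nbh (P (n # ms)) (x # xs) = (\<lambda>y. y # xs) ` ({..<n} - {x}) \<union> (\<lambda>ys. x # ys) ` nbh (P ms) xs"
proof (rule set_eqI)
  fix z
  have lxs: "length xs = length ms" using xs by (simp add: vertsP)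
  show "z \<in> nbh (P (n # ms)) (x # xs) \<longleftrightarrow> z \<in> (\<lambda>y. y # xs) ` ({..<n} - {x}) \<union> (\<lambda>ys. x # ys) ` nbh (P ms) xs"
  proof
    assume "z \<in> nbh (P (n # ms)) (x # xs)"
    then have zv: "z \<in> verts (P (n # ms))" and
      ex: "\<exists>j<length (n#ms). (x#xs) ! j \<noteq> z ! j \<and> (\<forall>i<length (n#ms). i \<noteq> j \<longrightarrow> (x#xs) ! i = z ! i)"
      by (auto simp: nbh_def adjP)
    from zv obtain y ys where z: "z = y # ys" "y < n" "ys \<in> verts (P ms)" by (auto simp: vertsP_Cons)
    have lys: "length ys = length ms" using z by (simp add: vertsP)
    from ex[unfolded z] have "(x \<noteq> y \<and> (\<forall>i<length ms. xs ! i = ys ! i)) \<or>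
       (\<exists>j<length ms. xs ! j \<noteq> ys ! j \<and> x = y \<and> (\<forall>i<length ms. i \<noteq> j \<longrightarrow> xs ! i = ys ! i))"
      by (simp add: Ex_less_Suc2 All_less_Suc2)
    then show "z \<in> (\<lambda>y. y # xs) ` ({..<n} - {x}) \<union> (\<lambda>ys. x # ys) ` nbh (P ms) xs"
    proof
      assume h: "x \<noteq> y \<and> (\<forall>i<length ms. xs ! i = ys ! i)"
      then have "xs = ys" using lxs lys by (simp add: list_eq_iff_nth_eq)
      then show ?thesis using z h by auto
    next
      assume h: "\<exists>j<length ms. xs ! j \<noteq> ys ! j \<and> x = y \<and> (\<forall>i<length ms. i \<noteq> j \<longrightarrow> xs ! i = ys ! i)"
      then have "ys \<in> nbh (P ms) xs" using xs z by (auto simp: nbh_def adjP)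
      then show ?thesis using z h by auto
    qed
  next
    assume "z \<in> (\<lambda>y. y # xs) ` ({..<n} - {x}) \<union> (\<lambda>ys. x # ys) ` nbh (P ms) xs"
    then show "z \<in> nbh (P (n # ms)) (x # xs)"
    proof
      assume "z \<in> (\<lambda>y. y # xs) ` ({..<n} - {x})"
      then obtain y where y: "y < n" "y \<noteq> x" "z = y # xs" by auto
      then show ?thesis using x xs
        by (auto simp: nbh_def adjP vertsP_Cons Ex_less_Suc2 All_less_Suc2)
    next
      assume "z \<in> (\<lambda>ys. x # ys) ` nbh (P ms) xs"
      then obtain ys where ys: "ys \<in> nbh (P ms) xs" "z = x # ys" by auto
      then show ?thesis using x xs
        by (auto simp: nbh_def adjP vertsP_Cons Ex_less_Suc2 All_less_Suc2)
    qed
  qed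
qed

lemma finite_nbhP: "finite (nbh (P ns) x)"
  using finite_vertsP[of ns] by (simp add: nbh_def)

lemma degree_nbh: "degree G x = card (nbh G x)"
  by (simp add: degree_def nbh_def)

lemma degreeP_Cons:
  assumes x: "x < n" and xs: "xs \<in> verts (P ms)"
  shows "degree (P (n # ms)) (x # xs) = (n - 1) + degree (P ms) xs"
proof -
  have "degree (P (n # ms)) (x # xs) = card (nbh (P (n # ms)) (x # xs))"
    by (simp add: degree_def nbh_def)
  also have "\<dots> = card ((\<lambda>y. y # xs) ` ({..<n} - {x})) + card ((\<lambda>ys. x # ys) ` nbh (P ms) xs)"
    unfolding nbhP_Cons[OF x xs]
    by (rule card_Un_disjoint) (auto simp: finite_nbhP)
  also have "\<dots> = (n - 1) + card (nbh (P ms) xs)"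
    using x by (simp add: card_image inj_on_def)
  finally show ?thesis by (simp add: degree_def nbh_def)
qed

lemma degreeP: "u \<in> verts (P ns) \<Longrightarrow> degree (P ns) u = (\<Sum>n\<leftarrow>ns. n - 1)"
proof (induction ns arbitrary: u)
  case Nil
  then show ?case using nbhP_Nil[of u] by (simp add: degree_nbh)
next
  case (Cons n ms)
  then obtain y ys where "u = y # ys" "y < n" "ys \<in> verts (P ms)" by (auto simp: vertsP_Cons)
  then show ?case using Cons.IH degreeP_Cons by simp
qed

lemma lapvP_Cons:
  assumes y: "y < n" and ys: "ys \<in> verts (P ms)"
  shows "lapv (P (n # ms)) f (y # ys) = of_nat n * f (y # ys) - (\<Sum>y'<n. f (y' # ys))
     + lapv (P ms) (\<lambda>zs. f (y # zs)) ys"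
proof -
  have yv: "y # ys \<in> verts (P (n # ms))" using y ys by (simp add: vertsP_Cons)
  have s: "(\<Sum>z\<in>nbh (P (n # ms)) (y # ys). f z) =
     (\<Sum>y'\<in>{..<n} - {y}. f (y' # ys)) + (\<Sum>zs\<in>nbh (P ms) ys. f (y # zs))"
    unfolding nbhP_Cons[OF y ys]
    by (subst sum.union_disjoint) (auto simp: finite_nbhP sum.reindex inj_on_def)
  have s2: "(\<Sum>y'\<in>{..<n} - {y}. f (y' # ys)) = (\<Sum>y'<n. f (y' # ys)) - f (y # ys)"
    using y by (simp add: sum_diff1)
  have n1: "of_nat (n - Suc 0) = (of_nat n - 1 :: complex)" using y by (simp add: of_nat_diff)
  show ?thesis
    unfolding lapv_eq[OF finite_vertsP yv] lapv_eq[OF finite_vertsP ys] degreeP_Cons[OF y ys] s s2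
    by (simp add: n1 algebra_simps)
qed


lemma lapv_scale: "lapv G (\<lambda>z. c * h z) x = c * lapv G h x"
  unfolding lapv_def by (simp add: sum_distrib_left algebra_simps)

lemma prod_eig:
  assumes y: "y < n" and ys: "ys \<in> verts (P ms)"
    and g: "of_nat n * g y - (\<Sum>y'<n. g y') = of_nat \<alpha> * g y"
    and h: "lapv (P ms) h ys = of_nat \<mu> * h ys"
  shows "lapv (P (n # ms)) (\<lambda>z. g (hd z) * h (tl z)) (y # ys) = of_nat (\<alpha> + \<mu>) * (g y * h ys)"
proof -
  have "lapv (P (n # ms)) (\<lambda>z. g (hd z) * h (tl z)) (y # ys)
      = (of_nat n * g y - (\<Sum>y'<n. g y')) * h ys + g y * lapv (P ms) h ys"
    unfolding lapvP_Cons[OF y ys] by (simp add: lapv_scale sum_distrib_right[symmetric] algebra_simps)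
  also have "\<dots> = of_nat (\<alpha> + \<mu>) * (g y * h ys)" using g h by (simp add: algebra_simps)
  finally show ?thesis .
qed

lemma sum_list_mult_right: "(\<Sum>p\<leftarrow>F. f p * c) = (\<Sum>p\<leftarrow>F. f p) * (c::complex)"
  by (induction F) (auto simp: algebra_simps)

lemma decompP:
  "(\<forall>n\<in>set ns. even n) \<Longrightarrow> u \<in> verts (P ns) \<Longrightarrow>
   \<exists>F::(nat \<times> (nat list \<Rightarrow> complex)) list.
     (\<forall>p\<in>set F. even (fst p) \<and> (\<forall>x\<in>verts (P ns). lapv (P ns) (snd p) x = of_nat (fst p) * snd p x))
   \<and> (\<forall>x\<in>verts (P ns). (if x = u then 1 else 0) = (\<Sum>p\<leftarrow>F. snd p x))"
proof (induction ns arbitrary: u)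
  case Nil
  have "lapv (P []) (\<lambda>_. 1) x = 0" if "x \<in> verts (P [])" for x
    using that lapv_eq[OF finite_vertsP that] by (simp add: degree_nbh nbhP_Nil)
  then show ?case using Nil.prems
    by (intro exI[of _ "[(0, \<lambda>_. 1)]"]) (auto simp: vertsP_Nil)
next
  case (Cons n ms)
  from Cons.prems obtain x xs where u: "u = x # xs" "x < n" "xs \<in> verts (P ms)"
    by (auto simp: vertsP_Cons)
  have evn: "even n" and evms: "\<forall>n\<in>set ms. even n" using Cons.prems by auto
  obtain Fm where Fm_eig: "\<forall>p\<in>set Fm. even (fst p) \<and> (\<forall>x\<in>verts (P ms). lapv (P ms) (snd p) x = of_nat (fst p) * snd p x)"
    and Fm_dec: "\<forall>z\<in>verts (P ms). (if z = xs then 1 else 0) = (\<Sum>p\<leftarrow>Fm. snd p z)"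
    using Cons.IH[OF evms u(3)] by blast
  have n0: "n \<noteq> 0" using u by simp
  define g1 where "g1 = (\<lambda>y. (if y = x then 1 else 0) - 1 / (of_nat n :: complex))"
  define g2 where "g2 = (\<lambda>y::nat. 1 / (of_nat n :: complex))"
  have sg1: "(\<Sum>y'<n. g1 y') = 0" using u(2) n0 by (simp add: g1_def sum_subtractf)
  have sg2: "(\<Sum>y'<n. g2 y') = 1" using n0 by (simp add: g2_def)
  have eg1: "of_nat n * g1 y - (\<Sum>y'<n. g1 y') = of_nat n * g1 y" for y using sg1 by simp
  have eg2: "of_nat n * g2 y - (\<Sum>y'<n. g2 y') = of_nat 0 * g2 y" for y using sg2 n0 by (simp add: g2_def)
  define F where "F = map (\<lambda>p. (n + fst p, \<lambda>z. g1 (hd z) * snd p (tl z))) Fm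
      @ map (\<lambda>p. (fst p, \<lambda>z. g2 (hd z) * snd p (tl z))) Fm"
  have eig: "\<forall>p\<in>set F. even (fst p) \<and> (\<forall>z\<in>verts (P (n # ms)). lapv (P (n # ms)) (snd p) z = of_nat (fst p) * snd p z)"
  proof
    fix p assume p: "p \<in> set F"
    show "even (fst p) \<and> (\<forall>z\<in>verts (P (n # ms)). lapv (P (n # ms)) (snd p) z = of_nat (fst p) * snd p z)"
    proof (cases "p \<in> set (map (\<lambda>p. (n + fst p, \<lambda>z. g1 (hd z) * snd p (tl z))) Fm)")
      case True
      then obtain q where q: "q \<in> set Fm" and pq: "p = (n + fst q, \<lambda>z. g1 (hd z) * snd q (tl z))" by auto
      show ?thesis
      proof
        show "even (fst p)" using pq q Fm_eig evn by auto
        show "\<forall>z\<in>verts (P (n # ms)). lapv (P (n # ms)) (snd p) z = of_nat (fst p) * snd p z"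
        proof
          fix z assume "z \<in> verts (P (n # ms))"
          then obtain y ys where z: "z = y # ys" "y < n" "ys \<in> verts (P ms)" by (auto simp: vertsP_Cons)
          show "lapv (P (n # ms)) (snd p) z = of_nat (fst p) * snd p z"
            using prod_eig[OF z(2) z(3) eg1, of "snd q" "fst q"] Fm_eig q z pq by simp
        qed
      qed
    next
      case False
      then have "p \<in> set (map (\<lambda>p. (fst p, \<lambda>z. g2 (hd z) * snd p (tl z))) Fm)" using p F_def by auto
      then obtain q where q: "q \<in> set Fm" and pq: "p = (fst q, \<lambda>z. g2 (hd z) * snd q (tl z))" by auto
      show ?thesis
      proof
        show "even (fst p)" using pq q Fm_eig by auto
        show "\<forall>z\<in>verts (P (n # ms)). lapv (P (n # ms)) (snd p) z = of_nat (fst p) * snd p z"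
        proof
          fix z assume "z \<in> verts (P (n # ms))"
          then obtain y ys where z: "z = y # ys" "y < n" "ys \<in> verts (P ms)" by (auto simp: vertsP_Cons)
          show "lapv (P (n # ms)) (snd p) z = of_nat (fst p) * snd p z"
            using prod_eig[OF z(2) z(3) eg2, of "snd q" "fst q"] Fm_eig q z pq by simp
        qed
      qed
    qed
  qed
  have dec: "\<forall>z\<in>verts (P (n # ms)). (if z = u then 1 else 0) = (\<Sum>p\<leftarrow>F. snd p z)"
  proof
    fix z assume "z \<in> verts (P (n # ms))"
    then obtain y ys where z: "z = y # ys" "y < n" "ys \<in> verts (P ms)" by (auto simp: vertsP_Cons)
    have "(\<Sum>p\<leftarrow>F. snd p z) = (g1 y + g2 y) * (\<Sum>p\<leftarrow>Fm. snd p ys)"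
      by (simp add: F_def z o_def sum_list_mult_left algebra_simps)
    also have "\<dots> = (if y = x then 1 else 0) * (if ys = xs then 1 else 0)"
      using Fm_dec z by (simp add: g1_def g2_def)
    finally show "(if z = u then 1 else 0) = (\<Sum>p\<leftarrow>F. snd p z)" using u z by simp
  qed
  show ?case using eig dec by blast
qed

theorem corollary6:
  shows "(\<forall>ns :: nat list. length ns \<ge> 2 \<and> odd (length ns) \<and> (\<forall>n\<in>set ns. n \<ge> 2 \<and> even n) \<longrightarrow>
            (\<forall>u\<in>verts (cart_prod (map complete_graph ns)).
               lap_pst (blowup2 (cart_prod (map complete_graph ns))) (0, u) (1, u)))
       \<and> (\<forall>d q :: nat. q \<ge> 2 \<and> even q \<and> d \<ge> 2 \<and> odd d \<longrightarrow>
            (\<forall>u\<in>verts (hamming d q). lap_pst (blowup2 (hamming d q)) (0, u) (1, u)))"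
proof -
  have odd_sum: "(\<forall>n\<in>set ns. n \<ge> 2 \<and> even n) \<Longrightarrow> odd (\<Sum>n\<leftarrow>ns. n - 1) = odd (length ns)" for ns :: "nat list"
    by (induction ns) auto
  have A: "\<forall>ns :: nat list. length ns \<ge> 2 \<and> odd (length ns) \<and> (\<forall>n\<in>set ns. n \<ge> 2 \<and> even n) \<longrightarrow>
            (\<forall>u\<in>verts (P ns). lap_pst (blowup2 (P ns)) (0, u) (1, u))"
  proof (intro allI impI ballI)
    fix ns :: "nat list" and u
    assume h: "length ns \<ge> 2 \<and> odd (length ns) \<and> (\<forall>n\<in>set ns. n \<ge> 2 \<and> even n)"
      and u: "u \<in> verts (P ns)"
    have ev: "\<forall>n\<in>set ns. even n" using h by blast
    obtain F where F: "\<forall>p\<in>set F. even (fst p) \<and> (\<forall>x\<in>verts (P ns). lapv (P ns) (snd p) x = of_nat (fst p) * snd p x)"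
      and D: "\<forall>x\<in>verts (P ns). (if x = u then 1 else 0) = (\<Sum>p\<leftarrow>F. snd p x)"
      using decompP[OF ev u] by blast
    have "odd (degree (P ns) u)" using degreeP[OF u] odd_sum[of ns] h by simp
    then show "lap_pst (blowup2 (P ns)) (0, u) (1, u)"
      by (rule blowup_pst[OF finite_vertsP u _ F D])
  qed
  show ?thesis
  proof
    show "\<forall>ns :: nat list. length ns \<ge> 2 \<and> odd (length ns) \<and> (\<forall>n\<in>set ns. n \<ge> 2 \<and> even n) \<longrightarrow>
            (\<forall>u\<in>verts (cart_prod (map complete_graph ns)).
               lap_pst (blowup2 (cart_prod (map complete_graph ns))) (0, u) (1, u))"
      using A by (simp add: P_def)
    show "\<forall>d q :: nat. q \<ge> 2 \<and> even q \<and> d \<ge> 2 \<and> odd d \<longrightarrow>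
            (\<forall>u\<in>verts (hamming d q). lap_pst (blowup2 (hamming d q)) (0, u) (1, u))"
    proof (intro allI impI)
      fix d q :: nat assume h: "q \<ge> 2 \<and> even q \<and> d \<ge> 2 \<and> odd d"
      have "hamming d q = P (replicate d q)" by (simp add: hamming_def P_def map_replicate)
      then show "\<forall>u\<in>verts (hamming d q). lap_pst (blowup2 (hamming d q)) (0, u) (1, u)"
        using A[rule_format, of "replicate d q"] h by auto
    qed
  qed
qed

end
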